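(* Consider a resource selection game with finite player set $N$ and finite resource set $R$ in which all resources have the same strictly increasing delay function $d$, and let $\mathcal{P}$ be a partition of $N$. Then every sequence of weak improving moves, each performed by a coalition that is a set of the partition $\mathcal{P}$, is finite, and it ends in a partition equilibrium.
   Context: Resource selection game: every player's strategy set is $R$; a state is $s=(s_i)_{i\in N}$ with $s_i\in R$; $\ell_r(s)$ is the number of players choosing $r$; player $i$'s cost is $c_i(s)=d(\ell_{s_i}(s))$ and utility $u_i(s)=-c_i(s)$, where $d:\{1,\dots,|N|\}\to\mathbb{N}$ is non-negative and strictly increasing. For $C\subseteq N$ write $s=(s_C,s_{-C})$. A weak improving move of coalition $C$ from state $s$ is a choice $s'_C$ with $u_i(s'_C,s_{-C})\ge u_i(s)$ for all $i\in C$ and $u_i(s'_C,s_{-C})>u_i(s)$ for at least one $i\in C$; the resulting state is $(s'_C,s_{-C})$. A partition equilibrium (with respect to $\mathcal{P}$) is a state in which no set $C\in\mathcal{P}$ has a weak improving move. *)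

theory Defs
  imports Main "HOL-Library.FuncSet" "HOL-Library.Disjoint_Sets"
begin

definition states :: "'n set \<Rightarrow> 'r set \<Rightarrow> ('n \<Rightarrow> 'r) set" where
  "states N R = N \<rightarrow>\<^sub>E R"

definition load :: "'n set \<Rightarrow> ('n \<Rightarrow> 'r) \<Rightarrow> 'r \<Rightarrow> nat" where
  "load N s r = card {i \<in> N. s i = r}"

definition cost :: "'n set \<Rightarrow> (nat \<Rightarrow> nat) \<Rightarrow> ('n \<Rightarrow> 'r) \<Rightarrow> 'n \<Rightarrow> nat" where
  "cost N d s i = d (load N s (s i))"

definition utility :: "'n set \<Rightarrow> (nat \<Rightarrow> nat) \<Rightarrow> ('n \<Rightarrow> 'r) \<Rightarrow> 'n \<Rightarrow> int" where
  "utility N d s i = - int (cost N d s i)"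

definition weak_improving_move ::
  "'n set \<Rightarrow> 'r set \<Rightarrow> (nat \<Rightarrow> nat) \<Rightarrow> 'n set \<Rightarrow> ('n \<Rightarrow> 'r) \<Rightarrow> ('n \<Rightarrow> 'r) \<Rightarrow> bool" where
  "weak_improving_move N R d C s s' \<longleftrightarrow>
     s \<in> states N R \<and> s' \<in> states N R \<and> (\<forall>i. i \<notin> C \<longrightarrow> s' i = s i) \<and>
     (\<forall>i\<in>C. utility N d s' i \<ge> utility N d s i) \<and>
     (\<exists>i\<in>C. utility N d s' i > utility N d s i)"

definition partition_move ::
  "'n set \<Rightarrow> 'r set \<Rightarrow> (nat \<Rightarrow> nat) \<Rightarrow> 'n set set \<Rightarrow> ('n \<Rightarrow> 'r) \<Rightarrow> ('n \<Rightarrow> 'r) \<Rightarrow> bool" where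
  "partition_move N R d P s s' \<longleftrightarrow> (\<exists>C\<in>P. weak_improving_move N R d C s s')"

definition partition_equilibrium ::
  "'n set \<Rightarrow> 'r set \<Rightarrow> (nat \<Rightarrow> nat) \<Rightarrow> 'n set set \<Rightarrow> ('n \<Rightarrow> 'r) \<Rightarrow> bool" where
  "partition_equilibrium N R d P s \<longleftrightarrow>
     s \<in> states N R \<and> (\<forall>C\<in>P. \<not> (\<exists>s'. weak_improving_move N R d C s s'))"

end

theory Submission imports Defs begin

definition wt :: "'n set set \<Rightarrow> 'n \<Rightarrow> 'n \<Rightarrow> nat" where
  "wt P i j = (if \<exists>C\<in>P. i \<in> C \<and> j \<in> C then 2 else 1)"

definition hh :: "'n set set \<Rightarrow> ('n \<Rightarrow> 'r) \<Rightarrow> 'n \<Rightarrow> 'n \<Rightarrow> nat" where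
  "hh P s i j = (if s i = s j then wt P i j else 0)"

definition pot :: "'n set \<Rightarrow> 'n set set \<Rightarrow> ('n \<Rightarrow> 'r) \<Rightarrow> nat" where
  "pot N P s = (\<Sum>i\<in>N. \<Sum>j\<in>N. hh P s i j)"

lemma load_sum: "finite N \<Longrightarrow> (\<Sum>j\<in>N. if s i = s j then 1 else 0) = load N s (s i)"
proof -
  assume N: "finite N"
  have "(\<Sum>j\<in>N. if s i = s j then 1 else 0) = (\<Sum>j\<in>N. (of_bool (s j = s i) :: nat))"
    by (rule sum.cong) auto
  also have "\<dots> = card (N \<inter> {j. s j = s i})" using N by simp
  also have "N \<inter> {j. s j = s i} = {j \<in> N. s j = s i}" by blast
  finally show ?thesis unfolding load_def .
qed

lemma pot_split:
  assumes N: "finite N" and P: "partition_on N P" and C: "C \<in> P"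
  shows "pot N P s = (\<Sum>i\<in>N-C. \<Sum>j\<in>N-C. hh P s i j) + 2 * (\<Sum>i\<in>C. load N s (s i))"
proof -
  have CN: "C \<subseteq> N" using P C by (auto simp: partition_on_def)
  have w2: "wt P i j = 2" if "i \<in> C" "j \<in> C" for i j using that C by (auto simp: wt_def)
  have w1: "wt P i j = 1" if "i \<in> C" "j \<in> N - C" for i j
  proof -
    have "\<not> (\<exists>C'\<in>P. i \<in> C' \<and> j \<in> C')"
    proof
      assume "\<exists>C'\<in>P. i \<in> C' \<and> j \<in> C'"
      then obtain C' where "C' \<in> P" "i \<in> C'" "j \<in> C'" by blast
      have dP: "disjoint P" using P by (simp add: partition_on_def)
      have "C' = C"
        using disjointD[OF dP \<open>C' \<in> P\<close> C] that(1) \<open>i \<in> C'\<close> by blast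
      with that \<open>j \<in> C'\<close> show False by blast
    qed
    then show ?thesis by (simp add: wt_def)
  qed
  have w1': "wt P j i = 1" if "i \<in> C" "j \<in> N - C" for i j
  proof -
    have "wt P j i = wt P i j" by (auto simp: wt_def)
    with w1[OF that] show ?thesis by simp
  qed
  have fC: "finite C" using CN N finite_subset by blast
  have fD: "finite (N - C)" using N by blast
  have sp: "\<And>g. (\<Sum>x\<in>N. g x) = (\<Sum>x\<in>C. g x) + (\<Sum>x\<in>N-C. g x)"
    using sum.subset_diff[OF CN N] by (simp add: add.commute)
  have rowC: "(\<Sum>j\<in>N. hh P s i j) = 2 * (\<Sum>j\<in>C. if s i = s j then 1 else 0)
       + (\<Sum>j\<in>N-C. if s i = s j then 1 else 0)" if "i \<in> C" for i
  proof -
    have "(\<Sum>j\<in>C. hh P s i j) = (\<Sum>j\<in>C. 2 * (if s i = s j then 1 else 0))"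
      by (rule sum.cong) (auto simp: hh_def w2 that)
    moreover have "(\<Sum>j\<in>N-C. hh P s i j) = (\<Sum>j\<in>N-C. (if s i = s j then 1 else 0))"
      by (rule sum.cong) (auto simp: hh_def w1 that)
    ultimately show ?thesis by (simp add: sp sum_distrib_left)
  qed
  have rowD: "(\<Sum>i\<in>N-C. \<Sum>j\<in>C. hh P s i j) = (\<Sum>j\<in>C. \<Sum>i\<in>N-C. if s j = s i then 1 else 0)"
    by (subst sum.swap) (rule sum.cong, simp, rule sum.cong, auto simp: hh_def w1')
  have "pot N P s = (\<Sum>i\<in>C. \<Sum>j\<in>N. hh P s i j) + (\<Sum>i\<in>N-C. \<Sum>j\<in>C. hh P s i j)
      + (\<Sum>i\<in>N-C. \<Sum>j\<in>N-C. hh P s i j)"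
  proof -
    have "pot N P s = (\<Sum>i\<in>C. \<Sum>j\<in>N. hh P s i j) + (\<Sum>i\<in>N-C. \<Sum>j\<in>N. hh P s i j)"
      unfolding pot_def by (rule sp)
    also have "(\<Sum>i\<in>N-C. \<Sum>j\<in>N. hh P s i j) = (\<Sum>i\<in>N-C. (\<Sum>j\<in>C. hh P s i j) + (\<Sum>j\<in>N-C. hh P s i j))"
      by (rule sum.cong) (auto intro: sp)
    finally show ?thesis by (simp add: sum.distrib add.assoc)
  qed
  also have "(\<Sum>i\<in>C. \<Sum>j\<in>N. hh P s i j) = (\<Sum>i\<in>C. 2 * (\<Sum>j\<in>C. if s i = s j then 1 else 0)
       + (\<Sum>j\<in>N-C. if s i = s j then 1 else 0))"
    by (rule sum.cong) (auto simp: rowC)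
  finally have "pot N P s = (\<Sum>i\<in>C. 2 * ((\<Sum>j\<in>C. if s i = s j then 1 else 0)
       + (\<Sum>j\<in>N-C. if s i = s j then 1 else 0))) + (\<Sum>i\<in>N-C. \<Sum>j\<in>N-C. hh P s i j)"
    by (simp add: rowD sum.distrib mult_2 distrib_left ac_simps)
  also have "(\<Sum>i\<in>C. 2 * ((\<Sum>j\<in>C. if s i = s j then 1 else 0)
       + (\<Sum>j\<in>N-C. if s i = s j then 1 else 0))) = (\<Sum>i\<in>C. 2 * load N s (s i))"
    by (rule sum.cong) (simp_all add: load_sum[OF N, symmetric] sp distrib_left)
  finally show ?thesis by (simp add: sum_distrib_left)
qed

lemma load_bounds:
  assumes "finite N" "i \<in> N"
  shows "1 \<le> load N s (s i)" "load N s (s i) \<le> card N"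
proof -
  have "{j \<in> N. s j = s i} \<noteq> {}" using assms by blast
  moreover have "finite {j \<in> N. s j = s i}" using assms by simp
  ultimately show "1 \<le> load N s (s i)" unfolding load_def
    by (simp add: Suc_leI card_gt_0_iff)
  show "load N s (s i) \<le> card N" unfolding load_def
    by (rule card_mono) (use assms in auto)
qed

lemma d_le:
  fixes d :: "nat \<Rightarrow> nat" and a b n :: nat
  assumes "strict_mono_on {1..n} d" "a \<in> {1..n}" "b \<in> {1..n}" "d a \<le> d b"
  shows "a \<le> b"
proof (rule ccontr)
  assume "\<not> a \<le> b"
  then have "b < a" by simp
  then have "d b < d a" by (rule strict_mono_onD[OF assms(1) assms(3) assms(2)])
  with assms(4) show False by simp
qed

lemma move_dec:
  assumes N: "finite N" and P: "partition_on N P" and C: "C \<in> P"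
    and d: "strict_mono_on {1..card N} d"
    and m: "weak_improving_move N R d C s s'"
  shows "pot N P s' < pot N P s"
proof -
  have CN: "C \<subseteq> N" using P C by (auto simp: partition_on_def)
  have fC: "finite C" using CN N finite_subset by blast
  have out: "\<And>i. i \<notin> C \<Longrightarrow> s' i = s i" using m by (simp add: weak_improving_move_def)
  have DD: "(\<Sum>i\<in>N-C. \<Sum>j\<in>N-C. hh P s' i j) = (\<Sum>i\<in>N-C. \<Sum>j\<in>N-C. hh P s i j)"
  proof (rule sum.cong[OF refl], rule sum.cong[OF refl])
    fix i j assume "i \<in> N - C" "j \<in> N - C"
    then show "hh P s' i j = hh P s i j" unfolding hh_def using out[of i] out[of j] by simp
  qed
  have le: "load N s' (s' i) \<le> load N s (s i)" if "i \<in> C" for i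
  proof -
    have "i \<in> N" using that CN by blast
    have "utility N d s' i \<ge> utility N d s i" using m that by (simp add: weak_improving_move_def)
    then have "d (load N s' (s' i)) \<le> d (load N s (s i))" by (simp add: utility_def cost_def)
    moreover have "load N s' (s' i) \<in> {1..card N}" using load_bounds[OF N \<open>i \<in> N\<close>, of s'] by simp
    moreover have "load N s (s i) \<in> {1..card N}" using load_bounds[OF N \<open>i \<in> N\<close>, of s] by simp
    ultimately show ?thesis using d_le[OF d] by blast
  qed
  obtain i where i: "i \<in> C" "utility N d s' i > utility N d s i"
    using m by (auto simp: weak_improving_move_def)
  have lt: "load N s' (s' i) < load N s (s i)"
  proof -
    have "i \<in> N" using i CN by blast
    have "d (load N s' (s' i)) < d (load N s (s i))" using i(2) by (simp add: utility_def cost_def)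
    moreover have "load N s' (s' i) \<le> load N s (s i)" using le i(1) by blast
    ultimately show ?thesis by (cases "load N s' (s' i) = load N s (s i)") auto
  qed
  have "(\<Sum>i\<in>C. load N s' (s' i)) < (\<Sum>i\<in>C. load N s (s i))"
    by (rule sum_strict_mono_ex1[OF fC]) (use le lt i in auto)
  moreover note e1 = pot_split[OF N P C, of s] and e2 = pot_split[OF N P C, of s']
  ultimately show ?thesis using DD by linarith
qed

theorem proposition1:
  fixes N :: "'n set" and R :: "'r set" and d :: "nat \<Rightarrow> nat" and P :: "'n set set"
  assumes "finite N" and "finite R"
    and "strict_mono_on {1..card N} d"
    and "partition_on N P"
  shows "\<not> (\<exists>f :: nat \<Rightarrow> ('n \<Rightarrow> 'r). \<forall>k. partition_move N R d P (f k) (f (Suc k)))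
    \<and> (\<forall>s\<in>states N R. \<not> (\<exists>s'. partition_move N R d P s s') \<longrightarrow> partition_equilibrium N R d P s)"
proof
  show "\<not> (\<exists>f :: nat \<Rightarrow> ('n \<Rightarrow> 'r). \<forall>k. partition_move N R d P (f k) (f (Suc k)))"
  proof
    assume "\<exists>f :: nat \<Rightarrow> ('n \<Rightarrow> 'r). \<forall>k. partition_move N R d P (f k) (f (Suc k))"
    then obtain f :: "nat \<Rightarrow> ('n \<Rightarrow> 'r)" where f: "\<And>k. partition_move N R d P (f k) (f (Suc k))" by blast
    have dec: "pot N P (f (Suc k)) < pot N P (f k)" for k
      using f[of k] move_dec[OF assms(1) assms(4) _ assms(3)] by (auto simp: partition_move_def)
    have "pot N P (f k) + k \<le> pot N P (f 0)" for k
    proof (induction k)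
      case 0 then show ?case by simp
    next
      case (Suc k) then show ?case using dec[of k] by simp
    qed
    from this[of "Suc (pot N P (f 0))"] show False by simp
  qed
  show "\<forall>s\<in>states N R. \<not> (\<exists>s'. partition_move N R d P s s') \<longrightarrow> partition_equilibrium N R d P s"
    by (auto simp: partition_move_def partition_equilibrium_def)
qed

end
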